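(* Let $q>0$ and let $Q_1,Q_2,\dots\in\mathcal{P}_q$. Let $\mathcal{G}_\kappa$ be the RKHS of $\mathbb{R}^D$-valued functions of a matrix-valued kernel $\kappa:\mathbb{R}^D\times\mathbb{R}^D\to\mathbb{R}^{D\times D}$. Suppose that for every $\varepsilon>0$ there exist $r_\varepsilon>0$ and $g\in\mathcal{G}_\kappa$ with $\mathcal{T}_Pg(x)\ge\|x\|_2^q\mathbf{1}\{\|x\|_2>r_\varepsilon\}-\varepsilon$ for all $x\in\mathbb{R}^D$. If $\mathcal{S}(Q_n,\mathcal{T}_P,\mathcal{G}_\kappa)\to0$ as $n\to\infty$, then $(Q_n)$ has uniformly integrable $q$-th moments.
   Context: $\mathcal{T}_P$ is the diffusion Stein operator $\mathcal{T}_Pg(x)=\frac1{p(x)}\langle\nabla,p(x)m(x)g(x)\rangle=2\langle b(x),g(x)\rangle+\langle m(x),\nabla g(x)\rangle$ for a target density $p$ on $\mathbb{R}^D$, where $m=\sigma\sigma^\top+c$ with $c$ skew-symmetric, $b=\langle\nabla,pm\rangle/(2p)$ (column-wise divergence $\langle\nabla,F\rangle_i=\sum_j\partial_jF_{ji}$), $(\nabla g)_{ij}=\partial_ig_j$ and $\langle\cdot,\cdot\rangle$ the Frobenius pairing. $\mathcal{S}(Q,\mathcal{T}_P,\mathcal{G}_\kappa)=\sup_{\|g\|_{\mathcal{G}_\kappa}\le1}|\mathbb{E}_{Y\sim Q}[\mathcal{T}_Pg(Y)]|$. $\mathcal{P}_q$ is the set of probability measures with finite $q$-th moment; $(Q_n)$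 has uniformly integrable $q$-th moments if $\lim_{r\to\infty}\limsup_{n}\int_{\{\|x\|_2>r\}}\|x\|_2^q dQ_n=0$. *)

theory Defs
  imports "HOL-Probability.Probability"
begin

definition partial :: "'n::finite \<Rightarrow> (real^'n \<Rightarrow> real) \<Rightarrow> real^'n \<Rightarrow> real" where
  "partial i f x = deriv (\<lambda>t. f (x + t *\<^sub>R axis i 1)) 0"

definition drift :: "(real^'n::finite \<Rightarrow> real) \<Rightarrow> (real^'n \<Rightarrow> real^'n^'n) \<Rightarrow> real^'n \<Rightarrow> real^'n" where
  "drift p m x = (\<chi> i. (\<Sum>j\<in>UNIV. partial j (\<lambda>y. p y * m y $ j $ i) x) / (2 * p x))"

definition stein_op :: "(real^'n::finite \<Rightarrow> real) \<Rightarrow> (real^'n \<Rightarrow> real^'n^'n)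
    \<Rightarrow> (real^'n \<Rightarrow> real^'n) \<Rightarrow> real^'n \<Rightarrow> real" where
  "stein_op p m g x = 2 * (drift p m x \<bullet> g x)
     + (\<Sum>i\<in>UNIV. \<Sum>j\<in>UNIV. m x $ i $ j * partial i (\<lambda>y. g y $ j) x)"

text \<open>E realises (an isometric copy of) the RKHS of R^D-valued functions of the
  matrix-valued kernel kappa: the Hilbert space 'h is mapped linearly and injectively
  onto a space of functions, kernel sections kappa(.,x) c belong to it, and the
  reproducing property <g, kappa(.,x) c> = <g(x), c> holds. The RKHS norm of E h is norm h.\<close>
definition vv_rkhs :: "(real^'n::finite \<Rightarrow> real^'n \<Rightarrow> real^'n^'n)
    \<Rightarrow> ('h::{real_inner,complete_space} \<Rightarrow> (real^'n \<Rightarrow> real^'n)) \<Rightarrow> bool" where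
  "vv_rkhs \<kappa> E \<longleftrightarrow>
     (\<forall>h k x. E (h + k) x = E h x + E k x) \<and>
     (\<forall>a h x. E (a *\<^sub>R h) x = a *\<^sub>R E h x) \<and>
     inj E \<and>
     (\<forall>x c. \<exists>k. E k = (\<lambda>y. \<kappa> y x *v c) \<and> (\<forall>h. inner h k = E h x \<bullet> c))"

definition stein_disc :: "(real^'n::finite) measure \<Rightarrow> ((real^'n \<Rightarrow> real^'n) \<Rightarrow> real^'n \<Rightarrow> real)
    \<Rightarrow> ('h::{real_inner,complete_space} \<Rightarrow> (real^'n \<Rightarrow> real^'n)) \<Rightarrow> ereal" where
  "stein_disc Q T E = (SUP h\<in>{h. norm h \<le> 1}.
      (if integrable Q (T (E h)) then ereal \<bar>\<integral>y. T (E h) y \<partial>Q\<bar> else \<infinity>))"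

definition unif_int_moments :: "real \<Rightarrow> (nat \<Rightarrow> (real^'n::finite) measure) \<Rightarrow> bool" where
  "unif_int_moments q Qs \<longleftrightarrow>
     ((\<lambda>r. limsup (\<lambda>n. ereal (\<integral>x. indicator {x. norm x > r} x * norm x powr q \<partial>Qs n)))
        \<longlongrightarrow> 0) at_top"

end

theory Submission
  imports Defs
begin

lemma partial_scale:
  fixes g :: "real^'n::finite \<Rightarrow> real^'n"
  assumes "g differentiable (at x)"
  shows "partial i (\<lambda>y. (a *\<^sub>R g y) $ j) x = a * partial i (\<lambda>y. g y $ j) x"
proof -
  have d: "(\<lambda>t. g (x + t *\<^sub>R axis i 1) $ j) differentiable (at 0)"
  proof -
    have "(\<lambda>t::real. x + t *\<^sub>R axis i 1) differentiable (at 0)" by (intro derivative_intros)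
    moreover have "g differentiable (at (x + 0 *\<^sub>R axis i 1))" using assms by simp
    ultimately have "(g \<circ> (\<lambda>t::real. x + t *\<^sub>R axis i 1)) differentiable (at 0)"
      by (intro differentiable_chain_at)
    then have "((\<lambda>v. v $ j) \<circ> (g \<circ> (\<lambda>t::real. x + t *\<^sub>R axis i 1))) differentiable (at 0)"
      by (rule differentiable_chain_at) (auto intro: bounded_linear_imp_differentiable bounded_linear_vec_nth)
    then show ?thesis by (simp add: o_def)
  qed
  then have "DERIV (\<lambda>t. g (x + t *\<^sub>R axis i 1) $ j) 0 :> partial i (\<lambda>y. g y $ j) x"
    unfolding partial_def using DERIV_deriv_iff_real_differentiable by blast
  then have "DERIV (\<lambda>t. a * g (x + t *\<^sub>R axis i 1) $ j) 0 :> a * partial i (\<lambda>y. g y $ j) x"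
    by (rule DERIV_cmult)
  then show ?thesis unfolding partial_def by (simp add: DERIV_imp_deriv)
qed

lemma stein_scale:
  fixes g :: "real^'n::finite \<Rightarrow> real^'n"
  assumes "g differentiable (at x)"
  shows "stein_op p m (\<lambda>y. a *\<^sub>R g y) x = a * stein_op p m g x"
  unfolding stein_op_def using partial_scale[OF assms, of _ a]
  by (simp add: sum_distrib_left algebra_simps)

theorem mainTheorem5:
  fixes p :: "real^'n::finite \<Rightarrow> real"
    and \<sigma> :: "real^'n \<Rightarrow> real^'k::finite^'n"
    and c :: "real^'n \<Rightarrow> real^'n^'n"
    and m :: "real^'n \<Rightarrow> real^'n^'n"
    and \<kappa> :: "real^'n \<Rightarrow> real^'n \<Rightarrow> real^'n^'n"
    and E :: "'h::{real_inner,complete_space} \<Rightarrow> (real^'n \<Rightarrow> real^'n)"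
    and Q :: "nat \<Rightarrow> (real^'n) measure"
    and q :: real
  assumes p_pos: "\<forall>x. p x > 0"
    and p_density: "integrable lborel p" "(\<integral>x. p x \<partial>lborel) = 1"
    and m_def: "\<forall>x. m x = \<sigma> x ** transpose (\<sigma> x) + c x"
    and c_skew: "\<forall>x. transpose (c x) = - c x"
    and pm_diff: "\<forall>i j x. (\<lambda>y. p y * m y $ i $ j) differentiable (at x)"
    and rkhs: "vv_rkhs \<kappa> E"
    and G_diff: "\<forall>h x. E h differentiable (at x)"
    and q_pos: "q > 0"
    and Q_prob: "\<forall>n. prob_space (Q n)"
    and Q_borel: "\<forall>n. sets (Q n) = sets borel"
    and Q_moment: "\<forall>n. integrable (Q n) (\<lambda>x. norm x powr q)"
    and lyap: "\<forall>\<epsilon>>0. \<exists>r>0. \<exists>h. \<forall>x.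
                 stein_op p m (E h) x \<ge> norm x powr q * indicator {x. norm x > r} x - \<epsilon>"
    and conv: "(\<lambda>n. stein_disc (Q n) (stein_op p m) E) \<longlonglongrightarrow> 0"
  shows "unif_int_moments q Q"
proof -
  define X where "X r n = (\<integral>x. indicator {x. norm x > r} x * norm x powr q \<partial>Q n)" for r n
  have meas: "{x::real^'n. norm x > r} \<in> sets (Q n)" for r n
    using Q_borel by (simp add: open_Collect_less continuous_intros)
  have intX: "integrable (Q n) (\<lambda>x. indicator {x. norm x > r} x * norm x powr q)" for r n
    using integrable_real_mult_indicator[OF meas Q_moment[rule_format]] by (simp add: mult.commute)
  have Xnn: "X r n \<ge> 0" for r n
    unfolding X_def by (intro integral_nonneg_AE) (auto simp: indicator_def)
  have Xmono: "X r' n \<le> X r n" if "r \<le> r'" for r r' n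
    unfolding X_def using that
    by (intro integral_mono[OF intX intX]) (auto simp: indicator_def)
  have K: "\<exists>r. \<forall>r'\<ge>r. eventually (\<lambda>n. X r' n \<le> \<epsilon>) sequentially" if eps: "\<epsilon> > 0" for \<epsilon>
  proof -
    obtain r h where rh: "\<forall>x. stein_op p m (E h) x \<ge> norm x powr q * indicator {x. norm x > r} x - \<epsilon>/2"
      using lyap eps by (meson half_gt_zero)
    define a where "a = 1 / (norm h + 1)"
    have a_pos: "a > 0" unfolding a_def by (simp add: add_pos_nonneg add.commute)
    define h0 where "h0 = a *\<^sub>R h"
    have nh0: "norm h0 \<le> 1" unfolding h0_def a_def using add_pos_nonneg[of 1 "norm h"] by (simp add: field_simps add.commute)
    have Eh0: "E h0 = (\<lambda>x. a *\<^sub>R E h x)"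
      using rkhs unfolding vv_rkhs_def h0_def by auto
    have T0: "stein_op p m (E h0) = (\<lambda>x. a * stein_op p m (E h) x)"
      unfolding Eh0 using stein_scale G_diff by blast
    have ev: "eventually (\<lambda>n. stein_disc (Q n) (stein_op p m) E < ereal (a * (\<epsilon>/2))) sequentially"
      using conv eps a_pos by (intro order_tendstoD(2)) auto
    show ?thesis
    proof (intro exI allI impI)
      fix r' assume "r \<le> r'"
      show "eventually (\<lambda>n. X r' n \<le> \<epsilon>) sequentially"
        using ev
      proof eventually_elim
        case (elim n)
        let ?t = "(if integrable (Q n) (stein_op p m (E h0)) then ereal \<bar>\<integral>y. stein_op p m (E h0) y \<partial>Q n\<bar> else \<infinity>)"
        have "?t \<le> stein_disc (Q n) (stein_op p m) E"
          unfolding stein_disc_def using nh0 by (intro SUP_upper) auto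
        with elim have lt: "?t < ereal (a * (\<epsilon>/2))" by order
        then have i0: "integrable (Q n) (stein_op p m (E h0))"
          by (auto split: if_splits)
        with lt have b0: "\<bar>\<integral>y. stein_op p m (E h0) y \<partial>Q n\<bar> < a * (\<epsilon>/2)" by simp
        have Teq: "stein_op p m (E h) = (\<lambda>x. (1/a) * stein_op p m (E h0) x)"
          using a_pos unfolding T0 by auto
        have iT: "integrable (Q n) (stein_op p m (E h))"
          unfolding Teq using i0 by simp
        have "\<bar>\<integral>y. stein_op p m (E h) y \<partial>Q n\<bar> = (1/a) * \<bar>\<integral>y. stein_op p m (E h0) y \<partial>Q n\<bar>"
          unfolding Teq using a_pos by (simp add: abs_mult)
        also have "\<dots> < (1/a) * (a * (\<epsilon>/2))"
          using b0 a_pos by (intro mult_strict_left_mono) auto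
        also have "\<dots> = \<epsilon>/2" using a_pos by simp
        finally have bT: "\<bar>\<integral>y. stein_op p m (E h) y \<partial>Q n\<bar> < \<epsilon>/2" .
        interpret prob_space "Q n" using Q_prob by blast
        have "X r n \<le> (\<integral>x. stein_op p m (E h) x + \<epsilon>/2 \<partial>Q n)"
          unfolding X_def using rh
          by (intro integral_mono[OF intX]) (auto intro: iT simp: algebra_simps)
        also have "\<dots> = (\<integral>x. stein_op p m (E h) x \<partial>Q n) + \<epsilon>/2"
          using iT prob_space by simp
        finally have "X r n \<le> \<epsilon>" using bT by linarith
        then show ?case using Xmono[OF \<open>r \<le> r'\<close>, of n] by linarith
      qed
    qed
  qed
  show ?thesis
    unfolding unif_int_moments_def X_def[symmetric]
  proof (rule order_tendstoI)
    fix a :: ereal assume "a < 0"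
    have "0 \<le> limsup (\<lambda>n. ereal (X r n))" for r
      by (intro le_Limsup) (auto simp: Xnn)
    then show "eventually (\<lambda>r. a < limsup (\<lambda>n. ereal (X r n))) at_top"
      using \<open>a < 0\<close> by (intro always_eventually allI) (meson order.strict_trans2)
  next
    fix a :: ereal assume "0 < a"
    then obtain e where e: "0 < e" "e < a" using dense by blast
    then obtain b where b: "e = ereal b" by (cases e) auto
    with e have "b > 0" by simp
    then obtain r where r: "\<forall>r'\<ge>r. eventually (\<lambda>n. X r' n \<le> b) sequentially" using K by blast
    show "eventually (\<lambda>r. limsup (\<lambda>n. ereal (X r n)) < a) at_top"
      unfolding eventually_at_top_linorder
    proof (intro exI allI impI)
      fix r' assume "r' \<ge> r"
      then have "limsup (\<lambda>n. ereal (X r' n)) \<le> ereal b"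
        using r by (intro Limsup_bounded) auto
      then show "limsup (\<lambda>n. ereal (X r' n)) < a" using e b by auto
    qed
  qed
qed

end
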